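(* Define a sequence $(a_n)_{n\ge1}$ by $a_1=1$, $a_2=2$ and $n a_n=(n+2)a_{n-1}+2(n+1)a_{n-2}$ for $n\ge 3$. Then: (a) for $n\ge 2$, the number of $\alpha\in\mathcal{ORCT}^*_n$ with no fixed points is $a_{n-1}$; (b) for $n\ge 1$, the number of $\alpha\in\mathcal{ORCT}^*_n$ with exactly one fixed point is $a_n$; (c) for $m\ge 2$, no $\alpha\in\mathcal{ORCT}^*_n$ has exactly $m$ fixed points.
   Context: $X_n=\{1,2,\dots,n\}$ with its usual order; maps are written on the right ($x\alpha$). A map $\alpha:X_n\to X_n$ is order-reversing if $x\le y$ implies $x\alpha\ge y\alpha$, and a contraction if $|x\alpha-y\alpha|\le|x-y|$ for all $x,y$. $\mathcal{ORCT}^*_n$ is the set of all order-reversing contractions $X_n\to X_n$ defined on all of $X_n$ (this includes the constant maps). A fixed point of $\alpha$ is $x$ with $x\alpha=x$. *)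

theory Defs
  imports Complex_Main "HOL-Library.FuncSet"
begin

text \<open>Maps X_n -> X_n are represented as functions nat => nat that are
  extensional on {1..n} (value undefined outside).\<close>

definition order_reversing :: "nat \<Rightarrow> (nat \<Rightarrow> nat) \<Rightarrow> bool" where
  "order_reversing n f \<longleftrightarrow> (\<forall>x\<in>{1..n}. \<forall>y\<in>{1..n}. x \<le> y \<longrightarrow> f y \<le> f x)"

definition contraction :: "nat \<Rightarrow> (nat \<Rightarrow> nat) \<Rightarrow> bool" where
  "contraction n f \<longleftrightarrow> (\<forall>x\<in>{1..n}. \<forall>y\<in>{1..n}.
      \<bar>int (f x) - int (f y)\<bar> \<le> \<bar>int x - int y\<bar>)"

definition ORCT :: "nat \<Rightarrow> (nat \<Rightarrow> nat) set" where
  "ORCT n = {f \<in> {1..n} \<rightarrow>\<^sub>E {1..n}. order_reversing n f \<and> contraction n f}"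

definition fixed_points :: "nat \<Rightarrow> (nat \<Rightarrow> nat) \<Rightarrow> nat set" where
  "fixed_points n f = {x \<in> {1..n}. f x = x}"

text \<open>a_1 = 1, a_2 = 2, n a_n = (n+2) a_(n-1) + 2(n+1) a_(n-2) for n >= 3.
  Values are real so that the recurrence is stated exactly (no truncating division);
  seqa 0 is an unused dummy.\<close>
fun seqa :: "nat \<Rightarrow> real" where
  "seqa 0 = 0"
| "seqa (Suc 0) = 1"
| "seqa (Suc (Suc 0)) = 2"
| "seqa (Suc (Suc (Suc k))) =
     ((real (k+3) + 2) * seqa (Suc (Suc k)) + 2 * (real (k+3) + 1) * seqa (Suc k)) / real (k+3)"

end

theory Submission
  imports Defs
begin

definition loc :: "nat \<Rightarrow> (nat \<Rightarrow> nat) \<Rightarrow> bool" where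
  "loc n f \<longleftrightarrow> (\<forall>x. 1 \<le> x \<and> x < n \<longrightarrow> f (Suc x) \<le> f x \<and> f x \<le> Suc (f (Suc x)))"

lemma chain:
  assumes L: "loc n f" and "1 \<le> x" "x \<le> y"
  shows "y \<le> n \<longrightarrow> f y \<le> f x \<and> f x \<le> f y + (y - x)"
  using assms(3)
proof (induction y rule: dec_induct)
  case base
  then show ?case by simp
next
  case (step y)
  show ?case
  proof
    assume "Suc y \<le> n"
    then have "f y \<le> f x \<and> f x \<le> f y + (y - x)" using step by simp
    moreover have "f (Suc y) \<le> f y \<and> f y \<le> Suc (f (Suc y))"
      using L step.hyps `Suc y \<le> n` assms(2) unfolding loc_def by auto
    ultimately show "f (Suc y) \<le> f x \<and> f x \<le> f (Suc y) + (Suc y - x)"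
      using step.hyps by auto
  qed
qed

lemma ORCT_local:
  "f \<in> ORCT n \<longleftrightarrow> f \<in> {1..n} \<rightarrow>\<^sub>E {1..n} \<and> loc n f"
proof
  assume F: "f \<in> ORCT n"
  have "loc n f" unfolding loc_def
  proof (intro allI impI)
    fix x assume x: "1 \<le> x \<and> x < n"
    have r: "f (Suc x) \<le> f x" using F x unfolding ORCT_def order_reversing_def by auto
    have "\<bar>int (f x) - int (f (Suc x))\<bar> \<le> \<bar>int x - int (Suc x)\<bar>"
    proof -
      have "contraction n f" using F unfolding ORCT_def by auto
      moreover have "x \<in> {1..n}" "Suc x \<in> {1..n}" using x by auto
      ultimately show ?thesis unfolding contraction_def by blast
    qed
    then show "f (Suc x) \<le> f x \<and> f x \<le> Suc (f (Suc x))" using r by auto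
  qed
  then show "f \<in> {1..n} \<rightarrow>\<^sub>E {1..n} \<and> loc n f" using F unfolding ORCT_def by auto
next
  assume A: "f \<in> {1..n} \<rightarrow>\<^sub>E {1..n} \<and> loc n f"
  have ch: "\<And>x y. 1 \<le> x \<Longrightarrow> x \<le> y \<Longrightarrow> y \<le> n \<Longrightarrow> f y \<le> f x \<and> f x \<le> f y + (y - x)"
    using chain A by blast
  have "order_reversing n f" unfolding order_reversing_def using ch by auto
  moreover have "contraction n f" unfolding contraction_def
  proof (intro ballI)
    fix x y assume "x \<in> {1..n}" "y \<in> {1..n}"
    then show "\<bar>int (f x) - int (f y)\<bar> \<le> \<bar>int x - int y\<bar>"
      using ch[of x y] ch[of y x] by (cases "x \<le> y") auto
  qed
  ultimately show "f \<in> ORCT n" using A unfolding ORCT_def by auto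
qed

lemma ORCT_strict:
  assumes "f \<in> ORCT n" "1 \<le> x" "x < y" "y \<le> n"
  shows "f y + x < f x + y"
  using assms unfolding ORCT_def order_reversing_def
  proof - have "f y \<le> f x" using assms unfolding ORCT_def order_reversing_def by auto then show ?thesis using assms(3) by linarith qed

lemma fp_le1:
  assumes "f \<in> ORCT n"
  shows "card (fixed_points n f) \<le> 1"
proof -
  have "\<forall>a\<in>fixed_points n f. \<forall>b\<in>fixed_points n f. a = b"
  proof (intro ballI, rule ccontr)
    fix a b assume a: "a \<in> fixed_points n f" and b: "b \<in> fixed_points n f" and "a \<noteq> b"
    then consider "a < b" | "b < a" by linarith
    then show False
    proof cases
      case 1 then show ?thesis using ORCT_strict[OF assms, of a b] a b unfolding fixed_points_def by auto
    next
      case 2 then show ?thesis using ORCT_strict[OF assms, of b a] a b unfolding fixed_points_def by auto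
    qed
  qed
  moreover have "finite (fixed_points n f)" unfolding fixed_points_def by auto
  ultimately show ?thesis using card_le_Suc0_iff_eq by auto
qed


definition cnt :: "nat set \<Rightarrow> nat \<Rightarrow> nat" where
  "cnt S x = card {i\<in>S. i < x}"

lemma cnt_Suc: "finite S \<Longrightarrow> cnt S (Suc x) = cnt S x + (if x \<in> S then 1 else 0)"
proof -
  assume fin: "finite S"
  show ?thesis
  proof (cases "x \<in> S")
    case True
    then have "{i\<in>S. i < Suc x} = insert x {i\<in>S. i < x}" by auto
    then show ?thesis using True fin unfolding cnt_def by simp
  next
    case False
    then have "{i\<in>S. i < Suc x} = {i\<in>S. i < x}" using less_Suc_eq by auto
    then show ?thesis using False unfolding cnt_def by simp
  qed
qed

lemma cnt_le: "finite S \<Longrightarrow> cnt S x \<le> card S"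
  unfolding cnt_def by (rule card_mono) auto

definition dec :: "nat \<Rightarrow> nat set \<times> nat \<Rightarrow> (nat \<Rightarrow> nat)" where
  "dec n p = restrict (\<lambda>x. snd p - cnt (fst p) x) {1..n}"

definition enc :: "nat \<Rightarrow> (nat \<Rightarrow> nat) \<Rightarrow> nat set \<times> nat" where
  "enc n f = ({i\<in>{1..<n}. f (Suc i) < f i}, f 1)"

definition PP :: "nat \<Rightarrow> (nat set \<times> nat) set" where
  "PP n = Sigma (Pow {1..<n}) (\<lambda>S. {Suc (card S)..n})"

lemma key:
  assumes F: "f \<in> ORCT n" and "1 \<le> x"
  shows "x \<le> n \<longrightarrow> f x + cnt (fst (enc n f)) x = f 1"
  using assms(2)
proof (induction x rule: dec_induct)
  case base
  show ?case unfolding cnt_def enc_def by auto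
next
  case (step x)
  let ?S = "fst (enc n f)"
  show ?case
  proof
    assume xn: "Suc x \<le> n"
    have fin: "finite ?S" unfolding enc_def by auto
    have ih: "f x + cnt ?S x = f 1" using step xn by simp
    have l: "f (Suc x) \<le> f x \<and> f x \<le> Suc (f (Suc x))"
      using F step.hyps xn unfolding ORCT_local loc_def by auto
    have mem: "x \<in> ?S \<longleftrightarrow> f (Suc x) < f x" using step.hyps xn unfolding enc_def by auto
    show "f (Suc x) + cnt ?S (Suc x) = f 1"
      using cnt_Suc[OF fin, of x] ih l mem by auto
  qed
qed

lemma dec_in:
  assumes "p \<in> PP n" shows "dec n p \<in> ORCT n"
proof -
  obtain S c where p: "p = (S, c)" by (cases p)
  have S: "S \<subseteq> {1..<n}" and c: "card S < c" "c \<le> n" using assms p unfolding PP_def by auto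
  have fin: "finite S" using S finite_subset by blast
  have cl: "\<And>x. cnt S x \<le> card S" using cnt_le[OF fin] .
  have "dec n p \<in> {1..n} \<rightarrow>\<^sub>E {1..n}"
  proof -
    have "\<And>i. cnt S i < c" using cl c le_less_trans by blast
    then have "\<And>i. Suc 0 \<le> c - cnt S i" by (metis Suc_leI zero_less_diff)
    then show ?thesis unfolding dec_def p restrict_PiE_iff using c by auto
  qed
  moreover have "loc n (dec n p)"
    unfolding loc_def
  proof (intro allI impI)
    fix x assume x: "1 \<le> x \<and> x < n"
    have "dec n p (Suc x) = c - cnt S (Suc x)" "dec n p x = c - cnt S x"
      using x unfolding dec_def p by auto
    then show "dec n p (Suc x) \<le> dec n p x \<and> dec n p x \<le> Suc (dec n p (Suc x))"
      using cnt_Suc[OF fin, of x] cl[of "Suc x"] c by auto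
  qed
  ultimately show ?thesis unfolding ORCT_local by auto
qed

lemma enc_in:
  assumes F: "f \<in> ORCT n" and n1: "1 \<le> n" shows "enc n f \<in> PP n"
proof -
  let ?S = "fst (enc n f)"
  have S: "?S \<subseteq> {1..<n}" unfolding enc_def by auto
  show ?thesis
  proof (cases "n = 0")
    case True
    then show ?thesis using n1 by auto
  next
    case False
    have k: "f n + cnt ?S n = f 1" using key[OF F, of n] False by auto
    have "{i\<in>?S. i < n} = ?S" using S by auto
    then have "cnt ?S n = card ?S" unfolding cnt_def by simp
    moreover have "f n \<in> {1..n}" "f 1 \<in> {1..n}" using F False unfolding ORCT_def PiE_iff by auto
    ultimately show ?thesis using k S unfolding PP_def enc_def by auto
  qed
qed

lemma dec_enc:
  assumes F: "f \<in> ORCT n" shows "dec n (enc n f) = f"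
proof
  fix x
  show "dec n (enc n f) x = f x"
  proof (cases "x \<in> {1..n}")
    case True
    then have "f x + cnt (fst (enc n f)) x = f 1" using key[OF F, of x] by auto
    then show ?thesis using True unfolding dec_def by (auto simp: enc_def)
  next
    case False
    then show ?thesis using F PiE_arb[of f "{1..n}" "\<lambda>_. {1..n}" x] unfolding dec_def ORCT_def by auto
  qed
qed

lemma enc_dec:
  assumes "p \<in> PP n" shows "enc n (dec n p) = p"
proof -
  obtain S c where p: "p = (S, c)" by (cases p)
  have S: "S \<subseteq> {1..<n}" and c: "card S < c" "c \<le> n" using assms p unfolding PP_def by auto
  have fin: "finite S" using S finite_subset by blast
  have cl: "\<And>x. cnt S x \<le> card S" using cnt_le[OF fin] .
  have n1: "1 \<le> n" using c by auto
  have c1: "cnt S 1 = 0" using S unfolding cnt_def by auto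
  have d1: "dec n p 1 = c" using n1 c1 unfolding dec_def p by auto
  have "{i\<in>{1..<n}. dec n p (Suc i) < dec n p i} = S"
  proof -
    have "\<And>i. i \<in> {1..<n} \<Longrightarrow> dec n p (Suc i) < dec n p i \<longleftrightarrow> i \<in> S"
    proof -
      fix i assume i: "i \<in> {1..<n}"
      have "dec n p (Suc i) = c - cnt S (Suc i)" "dec n p i = c - cnt S i"
        using i unfolding dec_def p by auto
      then show "dec n p (Suc i) < dec n p i \<longleftrightarrow> i \<in> S"
        using cnt_Suc[OF fin, of i] cl[of "Suc i"] c by auto
    qed
    then show ?thesis using S by auto
  qed
  then show ?thesis using d1 unfolding enc_def p by simp
qed

lemma card_ORCT: assumes n1: "1 \<le> n" shows "card (ORCT n) = card (PP n)"
proof -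
  have "bij_betw (dec n) (PP n) (ORCT n)"
    by (rule bij_betw_byWitness[where f'="enc n"]) (auto simp: enc_dec dec_enc dec_in enc_in[OF _ n1])
  then show ?thesis by (simp add: bij_betw_same_card)
qed


lemma sum_card_Pow:
  assumes "finite A"
  shows "(\<Sum>S\<in>Pow A. real (card S)) * 2 = real (card A) * 2 ^ card A"
  using assms
proof (induction A rule: finite_induct)
  case empty
  then show ?case by simp
next
  case (insert a A)
  have fP: "finite (Pow A)" using insert by simp
  have disj: "Pow A \<inter> insert a ` Pow A = {}" using insert by auto
  have inj: "inj_on (insert a) (Pow A)" unfolding inj_on_def by (metis Diff_insert_absorb PowD in_mono insert.hyps(2))
  have "(\<Sum>S\<in>Pow (insert a A). real (card S)) =
        (\<Sum>S\<in>Pow A. real (card S)) + (\<Sum>S\<in>insert a ` Pow A. real (card S))"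
    unfolding Pow_insert by (rule sum.union_disjoint) (use fP disj in auto)
  also have "(\<Sum>S\<in>insert a ` Pow A. real (card S)) = (\<Sum>S\<in>Pow A. real (card (insert a S)))"
    using sum.reindex[OF inj] by simp
  also have "\<dots> = (\<Sum>S\<in>Pow A. real (card S) + 1)"
  proof (rule sum.cong)
    fix S assume "S \<in> Pow A"
    then have "finite S" "a \<notin> S" using insert finite_subset by auto
    then show "real (card (insert a S)) = real (card S) + 1" by simp
  qed simp
  also have "\<dots> = (\<Sum>S\<in>Pow A. real (card S)) + 2 ^ card A"
    using insert by (simp add: sum.distrib card_Pow)
  finally show ?case using insert by (simp add: algebra_simps)
qed

lemma card_ORCT_formula:
  assumes n1: "1 \<le> n"
  shows "real (card (ORCT n)) * 2 = real n * 2 ^ n - real (n - 1) * 2 ^ (n - 1)"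
proof -
  let ?A = "{1..<n}"
  have fA: "finite ?A" by simp
  have cA: "card ?A = n - 1" by simp
  have "card (PP n) = (\<Sum>S\<in>Pow ?A. card {Suc (card S)..n})"
    unfolding PP_def by (rule card_SigmaI) auto
  then have "real (card (PP n)) = (\<Sum>S\<in>Pow ?A. real (card {Suc (card S)..n}))" by simp
  also have "\<dots> = (\<Sum>S\<in>Pow ?A. real n - real (card S))"
  proof (rule sum.cong)
    fix S assume "S \<in> Pow ?A"
    then have "card S \<le> n - 1" using card_mono[OF fA] cA by fastforce
    then show "real (card {Suc (card S)..n}) = real n - real (card S)" using n1 by simp
  qed simp
  also have "\<dots> = real n * 2 ^ (n - 1) - (\<Sum>S\<in>Pow ?A. real (card S))"
    by (simp add: sum_subtractf card_Pow cA)
  finally have "real (card (PP n)) * 2 = real n * 2 ^ (n - 1) * 2 - (\<Sum>S\<in>Pow ?A. real (card S)) * 2"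
    by (simp add: algebra_simps)
  also have "\<dots> = real n * 2 ^ n - real (n - 1) * 2 ^ (n - 1)"
  proof -
    have p2: "(2::real) ^ (n - 1) * 2 = 2 ^ n" using n1 by (cases n) auto
    show ?thesis using sum_card_Pow[OF fA] cA n1 p2 by (simp add: algebra_simps)
  qed
  finally show ?thesis using card_ORCT[OF n1] by simp
qed


lemma ORCT_range: "f \<in> ORCT n \<Longrightarrow> 1 \<le> x \<Longrightarrow> x \<le> n \<Longrightarrow> 1 \<le> f x \<and> f x \<le> n"
  unfolding ORCT_def PiE_iff by auto

lemma ORCT_undef: "f \<in> ORCT n \<Longrightarrow> x \<notin> {1..n} \<Longrightarrow> f x = undefined"
  unfolding ORCT_def using PiE_arb by blast

lemma ORCT_loc: "f \<in> ORCT n \<Longrightarrow> 1 \<le> x \<Longrightarrow> x < n \<Longrightarrow> f (Suc x) \<le> f x \<and> f x \<le> Suc (f (Suc x))"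
  unfolding ORCT_local loc_def by blast

lemma ORCT_mono: "f \<in> ORCT n \<Longrightarrow> 1 \<le> x \<Longrightarrow> x \<le> y \<Longrightarrow> y \<le> n \<Longrightarrow> f y \<le> f x"
  unfolding ORCT_def order_reversing_def by auto

definition Psi :: "nat \<Rightarrow> (nat \<Rightarrow> nat) \<Rightarrow> (nat \<Rightarrow> nat)" where
  "Psi m h = restrict (\<lambda>x. if x \<le> m \<and> x \<le> h x then h x + 1 else h (x - 1)) {1..Suc m}"

definition Phi :: "nat \<Rightarrow> (nat \<Rightarrow> nat) \<Rightarrow> (nat \<Rightarrow> nat)" where
  "Phi m f = restrict (\<lambda>x. if x < f x then f x - 1 else f (Suc x)) {1..m}"

lemma Psi_props:
  assumes H: "h \<in> ORCT m" and p: "1 \<le> p" "p \<le> m" "h p = p"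
  shows "Psi m h \<in> ORCT (Suc m) \<and> (\<forall>x\<in>{1..Suc m}. Psi m h x \<noteq> x)"
proof -
  let ?P = "Psi m h"
  have m1: "1 \<le> m" using p by simp
  have rg: "\<And>x. 1 \<le> x \<Longrightarrow> x \<le> m \<Longrightarrow> 1 \<le> h x \<and> h x \<le> m" using ORCT_range[OF H] by blast
  have P1: "\<And>x. 1 \<le> x \<Longrightarrow> x \<le> m \<Longrightarrow> x \<le> h x \<Longrightarrow> ?P x = h x + 1"
    unfolding Psi_def by auto
  have P2: "\<And>x. 1 \<le> x \<Longrightarrow> x \<le> Suc m \<Longrightarrow> \<not> (x \<le> m \<and> x \<le> h x) \<Longrightarrow> ?P x = h (x - 1)"
    unfolding Psi_def by auto
  have two: "\<And>x. 1 \<le> x \<Longrightarrow> x \<le> Suc m \<Longrightarrow> \<not> (x \<le> m \<and> x \<le> h x) \<Longrightarrow> 2 \<le> x"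
  proof -
    fix x assume "1 \<le> x" "x \<le> Suc m" "\<not> (x \<le> m \<and> x \<le> h x)"
    then show "2 \<le> x" using rg[of 1] m1 by (cases "x = 1") auto
  qed
  have "?P \<in> {1..Suc m} \<rightarrow>\<^sub>E {1..Suc m}"
    unfolding PiE_iff
  proof
    show "\<forall>x\<in>{1..Suc m}. ?P x \<in> {1..Suc m}"
    proof
      fix x assume x: "x \<in> {1..Suc m}"
      show "?P x \<in> {1..Suc m}"
      proof (cases "x \<le> m \<and> x \<le> h x")
        case True then show ?thesis using P1 rg x by auto
      next
        case False
        then have "2 \<le> x" using two x by auto
        then have "1 \<le> h (x - 1) \<and> h (x - 1) \<le> m" using rg[of "x - 1"] x by auto
        then show ?thesis using P2 False x by auto
      qed
    qed
    show "?P \<in> extensional {1..Suc m}" unfolding Psi_def by simp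
  qed
  moreover have "loc (Suc m) ?P" unfolding loc_def
  proof (intro allI impI)
    fix x assume x: "1 \<le> x \<and> x < Suc m"
    have nA: "\<not> (Suc x \<le> m \<and> Suc x \<le> h (Suc x)) \<Longrightarrow> ?P (Suc x) = h x"
      using P2[of "Suc x"] x by auto
    show "?P (Suc x) \<le> ?P x \<and> ?P x \<le> Suc (?P (Suc x))"
    proof (cases "x \<le> h x")
      case True
      then have Px: "?P x = h x + 1" using P1 x by auto
      show ?thesis
      proof (cases "Suc x \<le> m \<and> Suc x \<le> h (Suc x)")
        case True
        then show ?thesis using Px P1[of "Suc x"] ORCT_loc[OF H, of x] x by auto
      next
        case False
        then show ?thesis using Px nA by auto
      qed
    next
      case False
      then have "2 \<le> x" using two[of x] x by auto
      then obtain y where y: "x = Suc y" "1 \<le> y" by (cases x) auto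
      have Px: "?P x = h y" using P2[of x] False x y by auto
      have "\<not> (Suc x \<le> m \<and> Suc x \<le> h (Suc x))"
        using ORCT_loc[OF H, of x] False x by auto
      then have "?P (Suc x) = h x" using nA by auto
      then show ?thesis using Px ORCT_loc[OF H, of y] y x by auto
    qed
  qed
  moreover have "\<forall>x\<in>{1..Suc m}. ?P x \<noteq> x"
  proof (intro ballI notI)
    fix x assume x: "x \<in> {1..Suc m}" and fx: "?P x = x"
    show False
    proof (cases "x \<le> m \<and> x \<le> h x")
      case True then show ?thesis using P1 fx x by auto
    next
      case False
      then have "2 \<le> x" using two x by auto
      then obtain y where y: "x = Suc y" "1 \<le> y" by (cases x) auto
      have hy: "h y = x" using P2[of x] False x y fx by auto
      show False
      proof (cases "p \<le> y")
        case True
        show False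
        proof (cases "p = y")
          case True then show False using hy p y by auto
        next
          case False
          then have "h y + p < h p + y" using ORCT_strict[OF H, of p y] `p \<le> y` p y x by auto
          then show False using hy p y by auto
        qed
      next
        case False
        then have xm: "x \<le> m" and "x \<le> p" using y p by auto
        then have "h p \<le> h x" using ORCT_mono[OF H, of x p] x p by auto
        moreover have "h x < x" using False xm x \<open>x \<le> p\<close> \<open>\<not> (x \<le> m \<and> x \<le> h x)\<close> by auto
        ultimately show False using p \<open>x \<le> p\<close> by auto
      qed
    qed
  qed
  ultimately show ?thesis unfolding ORCT_local by auto
qed

lemma last_true:
  assumes "P (1::nat)" "\<not> P (Suc m)"
  shows "\<exists>x. 1 \<le> x \<and> x \<le> m \<and> P x \<and> \<not> P (Suc x)"
  using assms
proof (induction m)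
  case 0 then show ?case by simp
next
  case (Suc m)
  then show ?case
  proof (cases "P (Suc m)")
    case True then show ?thesis using Suc by auto
  next
    case False then show ?thesis using Suc by fastforce
  qed
qed

lemma Phi_props:
  assumes F: "f \<in> ORCT (Suc m)" and m1: "1 \<le> m" and nf: "\<forall>x\<in>{1..Suc m}. f x \<noteq> x"
  shows "Phi m f \<in> ORCT m \<and> (\<exists>p. 1 \<le> p \<and> p \<le> m \<and> Phi m f p = p)"
proof -
  let ?Q = "Phi m f"
  have rg: "\<And>x. 1 \<le> x \<Longrightarrow> x \<le> Suc m \<Longrightarrow> 1 \<le> f x \<and> f x \<le> Suc m \<and> f x \<noteq> x"
    using ORCT_range[OF F] nf by auto
  have Q1: "\<And>x. 1 \<le> x \<Longrightarrow> x \<le> m \<Longrightarrow> x < f x \<Longrightarrow> ?Q x = f x - 1" unfolding Phi_def by auto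
  have Q2: "\<And>x. 1 \<le> x \<Longrightarrow> x \<le> m \<Longrightarrow> \<not> x < f x \<Longrightarrow> ?Q x = f (Suc x)" unfolding Phi_def by auto
  have jump: "\<And>x. 1 \<le> x \<Longrightarrow> x \<le> m \<Longrightarrow> x < f x \<Longrightarrow> \<not> Suc x < f (Suc x) \<Longrightarrow> f x = Suc x \<and> f (Suc x) = x"
  proof -
    fix x assume a: "1 \<le> x" "x \<le> m" "x < f x" "\<not> Suc x < f (Suc x)"
    have "f (Suc x) \<noteq> Suc x" using rg[of "Suc x"] a by auto
    then show "f x = Suc x \<and> f (Suc x) = x" using ORCT_loc[OF F, of x] a by auto
  qed
  have "?Q \<in> {1..m} \<rightarrow>\<^sub>E {1..m}"
    unfolding PiE_iff
  proof
    show "\<forall>x\<in>{1..m}. ?Q x \<in> {1..m}"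
    proof
      fix x assume x: "x \<in> {1..m}"
      show "?Q x \<in> {1..m}"
      proof (cases "x < f x")
        case True then show ?thesis using Q1 rg[of x] x by auto
      next
        case False
        then have "f x < x" using rg[of x] x by auto
        then show ?thesis using Q2 False x rg[of "Suc x"] ORCT_loc[OF F, of x] by auto
      qed
    qed
    show "?Q \<in> extensional {1..m}" unfolding Phi_def by simp
  qed
  moreover have "loc m ?Q" unfolding loc_def
  proof (intro allI impI)
    fix x assume x: "1 \<le> x \<and> x < m"
    have l0: "f (Suc x) \<le> f x \<and> f x \<le> Suc (f (Suc x))" using ORCT_loc[OF F, of x] x by auto
    have l1: "f (Suc (Suc x)) \<le> f (Suc x) \<and> f (Suc x) \<le> Suc (f (Suc (Suc x)))"
      using ORCT_loc[OF F, of "Suc x"] x by auto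
    show "?Q (Suc x) \<le> ?Q x \<and> ?Q x \<le> Suc (?Q (Suc x))"
    proof (cases "x < f x")
      case True
      show ?thesis
      proof (cases "Suc x < f (Suc x)")
        case True
        then show ?thesis using Q1[of x] Q1[of "Suc x"] \<open>x < f x\<close> x l0 by auto
      next
        case False
        then have "f x = Suc x \<and> f (Suc x) = x" using jump[of x] True x by auto
        then show ?thesis using Q1[of x] Q2[of "Suc x"] True False x l1 by auto
      qed
    next
      case False
      then have "\<not> Suc x < f (Suc x)" using l0 by auto
      then show ?thesis using Q2[of x] Q2[of "Suc x"] False x l1 by auto
    qed
  qed
  moreover have "\<exists>p. 1 \<le> p \<and> p \<le> m \<and> ?Q p = p"
  proof -
    have "1 < f 1" using rg[of 1] by auto
    moreover have "\<not> Suc m < f (Suc m)" using rg[of "Suc m"] by auto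
    ultimately obtain x where x: "1 \<le> x" "x \<le> m" "x < f x" "\<not> Suc x < f (Suc x)"
      using last_true[of "\<lambda>x. x < f x" m] by auto
    then have "f x = Suc x" using jump by auto
    then show ?thesis using Q1[of x] x by auto
  qed
  ultimately show ?thesis unfolding ORCT_local by auto
qed

lemma Phi_Psi:
  assumes H: "h \<in> ORCT m" and p: "1 \<le> p" "p \<le> m" "h p = p"
  shows "Phi m (Psi m h) = h"
proof
  fix x
  let ?P = "Psi m h"
  show "Phi m ?P x = h x"
  proof (cases "x \<in> {1..m}")
    case False
    then show ?thesis using ORCT_undef[OF H False] unfolding Phi_def by auto
  next
    case True
    show ?thesis
    proof (cases "x \<le> h x")
      case True
      then have "?P x = h x + 1" using \<open>x \<in> {1..m}\<close> unfolding Psi_def by auto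
      then show ?thesis using True \<open>x \<in> {1..m}\<close> unfolding Phi_def by auto
    next
      case False
      have "2 \<le> x" using False ORCT_range[OF H, of 1] \<open>x \<in> {1..m}\<close> by (cases "x = 1") auto
      then obtain y where y: "x = Suc y" "1 \<le> y" by (cases x) auto
      have Px: "?P x = h y" using False \<open>x \<in> {1..m}\<close> y unfolding Psi_def by auto
      have "h y \<le> Suc (h x)" using ORCT_loc[OF H, of y] y \<open>x \<in> {1..m}\<close> by auto
      then have nB: "\<not> x < ?P x" using Px False by auto
      have "\<not> (Suc x \<le> m \<and> Suc x \<le> h (Suc x))" using ORCT_loc[OF H, of x] False \<open>x \<in> {1..m}\<close> by auto
      then have "?P (Suc x) = h x" using \<open>x \<in> {1..m}\<close> unfolding Psi_def by auto
      then show ?thesis using nB \<open>x \<in> {1..m}\<close> unfolding Phi_def by auto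
    qed
  qed
qed

lemma Psi_Phi:
  assumes F: "f \<in> ORCT (Suc m)" and m1: "1 \<le> m" and nf: "\<forall>x\<in>{1..Suc m}. f x \<noteq> x"
  shows "Psi m (Phi m f) = f"
proof
  fix x
  let ?Q = "Phi m f"
  have rg: "\<And>x. 1 \<le> x \<Longrightarrow> x \<le> Suc m \<Longrightarrow> 1 \<le> f x \<and> f x \<le> Suc m \<and> f x \<noteq> x"
    using ORCT_range[OF F] nf by auto
  show "Psi m ?Q x = f x"
  proof (cases "x \<in> {1..Suc m}")
    case False
    then show ?thesis using ORCT_undef[OF F False] unfolding Psi_def by auto
  next
    case xin: True
    show ?thesis
    proof (cases "x < f x")
      case True
      then have xm: "x \<le> m" using rg[of x] xin by auto
      then have "?Q x = f x - 1" using True xin unfolding Phi_def by auto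
      moreover have "x \<le> f x - 1" using True by auto
      ultimately show ?thesis using xm xin True unfolding Psi_def by auto
    next
      case False
      then have fx: "f x < x" using rg[of x] xin by auto
      have nA: "\<not> (x \<le> m \<and> x \<le> ?Q x)"
      proof
        assume a: "x \<le> m \<and> x \<le> ?Q x"
        then have "?Q x = f (Suc x)" using False xin unfolding Phi_def by auto
        moreover have "f (Suc x) \<le> f x" using ORCT_loc[OF F, of x] a xin by auto
        ultimately show False using a fx by auto
      qed
      have "2 \<le> x" using fx rg[of 1] xin by (cases "x = 1") auto
      then obtain y where y: "x = Suc y" "1 \<le> y" by (cases x) auto
      have ym: "y \<le> m" using y xin by auto
      have Ps: "Psi m ?Q x = ?Q y" using nA xin y unfolding Psi_def by auto
      have "?Q y = f x"
      proof (cases "y < f y")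
        case True
        have "f y \<le> Suc (f x)" using ORCT_loc[OF F, of y] y ym by auto
        then have fy: "f y = x" using True fx y by auto
        have "f x = y" using ORCT_loc[OF F, of y] y ym fx fy by auto
        then show ?thesis using True y ym fx fy unfolding Phi_def by auto
      next
        case False
        then show ?thesis using y ym unfolding Phi_def by auto
      qed
      then show ?thesis using Ps by simp
    qed
  qed
qed


lemma fin_fp: "finite (fixed_points n f)" unfolding fixed_points_def by auto

lemma fp1_iff:
  assumes "f \<in> ORCT n"
  shows "card (fixed_points n f) = 1 \<longleftrightarrow> (\<exists>p. 1 \<le> p \<and> p \<le> n \<and> f p = p)"
proof
  assume "card (fixed_points n f) = 1"
  then have "fixed_points n f \<noteq> {}" by auto
  then show "\<exists>p. 1 \<le> p \<and> p \<le> n \<and> f p = p" unfolding fixed_points_def by auto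
next
  assume "\<exists>p. 1 \<le> p \<and> p \<le> n \<and> f p = p"
  then have "fixed_points n f \<noteq> {}" unfolding fixed_points_def by auto
  then have "card (fixed_points n f) \<noteq> 0" using fin_fp by auto
  then show "card (fixed_points n f) = 1" using fp_le1[OF assms] by linarith
qed

lemma fp0_iff:
  "card (fixed_points n f) = 0 \<longleftrightarrow> (\<forall>x\<in>{1..n}. f x \<noteq> x)"
  using fin_fp[of n f] unfolding fixed_points_def by auto

lemma finite_ORCT: "finite (ORCT n)"
proof -
  have "ORCT n \<subseteq> {1..n} \<rightarrow>\<^sub>E {1..n}" unfolding ORCT_def by auto
  then show ?thesis using finite_PiE[of "{1..n}" "\<lambda>_. {1..n}"] finite_subset by auto
qed

lemma card_Z_F:
  assumes m1: "1 \<le> m"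
  shows "card {f \<in> ORCT (Suc m). card (fixed_points (Suc m) f) = 0}
       = card {f \<in> ORCT m. card (fixed_points m f) = 1}"
proof -
  have "bij_betw (Psi m) {f \<in> ORCT m. card (fixed_points m f) = 1}
                         {f \<in> ORCT (Suc m). card (fixed_points (Suc m) f) = 0}"
  proof (rule bij_betw_byWitness[where f'="Phi m"])
    show "\<forall>a\<in>{f \<in> ORCT m. card (fixed_points m f) = 1}. Phi m (Psi m a) = a"
    proof
      fix h assume "h \<in> {f \<in> ORCT m. card (fixed_points m f) = 1}"
      then have H: "h \<in> ORCT m" and "card (fixed_points m h) = 1" by auto
      then obtain p where "1 \<le> p" "p \<le> m" "h p = p" using fp1_iff[OF H] by blast
      then show "Phi m (Psi m h) = h" using Phi_Psi[OF H] by blast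
    qed
    show "\<forall>a\<in>{f \<in> ORCT (Suc m). card (fixed_points (Suc m) f) = 0}. Psi m (Phi m a) = a"
    proof
      fix f assume "f \<in> {f \<in> ORCT (Suc m). card (fixed_points (Suc m) f) = 0}"
      then have F: "f \<in> ORCT (Suc m)" and "card (fixed_points (Suc m) f) = 0" by auto
      then have "\<forall>x\<in>{1..Suc m}. f x \<noteq> x" using fp0_iff by blast
      then show "Psi m (Phi m f) = f" using Psi_Phi[OF F m1] by blast
    qed
    show "Psi m ` {f \<in> ORCT m. card (fixed_points m f) = 1}
          \<subseteq> {f \<in> ORCT (Suc m). card (fixed_points (Suc m) f) = 0}"
    proof
      fix g assume "g \<in> Psi m ` {f \<in> ORCT m. card (fixed_points m f) = 1}"
      then obtain h where h: "h \<in> ORCT m" "card (fixed_points m h) = 1" "g = Psi m h" by auto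
      then obtain p where "1 \<le> p" "p \<le> m" "h p = p" using fp1_iff[OF h(1)] by blast
      then have "g \<in> ORCT (Suc m) \<and> (\<forall>x\<in>{1..Suc m}. g x \<noteq> x)" using Psi_props[OF h(1)] h(3) by blast
      then show "g \<in> {f \<in> ORCT (Suc m). card (fixed_points (Suc m) f) = 0}" using fp0_iff[of "Suc m" g] by blast
    qed
    show "Phi m ` {f \<in> ORCT (Suc m). card (fixed_points (Suc m) f) = 0}
          \<subseteq> {f \<in> ORCT m. card (fixed_points m f) = 1}"
    proof
      fix g assume "g \<in> Phi m ` {f \<in> ORCT (Suc m). card (fixed_points (Suc m) f) = 0}"
      then obtain f where f: "f \<in> ORCT (Suc m)" "card (fixed_points (Suc m) f) = 0" "g = Phi m f" by auto
      then have "\<forall>x\<in>{1..Suc m}. f x \<noteq> x" using fp0_iff by blast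
      then have "g \<in> ORCT m \<and> (\<exists>p. 1 \<le> p \<and> p \<le> m \<and> g p = p)" using Phi_props[OF f(1) m1] f(3) by blast
      then show "g \<in> {f \<in> ORCT m. card (fixed_points m f) = 1}" using fp1_iff[of g m] by blast
    qed
  qed
  then show ?thesis by (simp add: bij_betw_same_card)
qed

lemma card_split:
  "card (ORCT n) = card {f \<in> ORCT n. card (fixed_points n f) = 0} + card {f \<in> ORCT n. card (fixed_points n f) = 1}"
proof -
  have eq: "ORCT n = {f \<in> ORCT n. card (fixed_points n f) = 0} \<union> {f \<in> ORCT n. card (fixed_points n f) = 1}"
  proof
    show "ORCT n \<subseteq> {f \<in> ORCT n. card (fixed_points n f) = 0} \<union> {f \<in> ORCT n. card (fixed_points n f) = 1}"
    proof
      fix f assume "f \<in> ORCT n"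
      then show "f \<in> {f \<in> ORCT n. card (fixed_points n f) = 0} \<union> {f \<in> ORCT n. card (fixed_points n f) = 1}"
        using fp_le1[of f n] by auto
    qed
  qed auto
  have f1: "finite {f \<in> ORCT n. card (fixed_points n f) = 0}" and f2: "finite {f \<in> ORCT n. card (fixed_points n f) = 1}"
    using finite_ORCT by auto
  have d: "{f \<in> ORCT n. card (fixed_points n f) = 0} \<inter> {f \<in> ORCT n. card (fixed_points n f) = 1} = {}"
    by auto
  show ?thesis by (subst eq) (rule card_Un_disjoint[OF f1 f2 d])
qed

lemma Z1: "{f \<in> ORCT 1. card (fixed_points 1 f) = 0} = {}"
proof -
  have "\<And>f. f \<in> ORCT 1 \<Longrightarrow> f 1 = 1" using ORCT_range by fastforce
  then show ?thesis using fp0_iff by fastforce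
qed

lemma seqa_pair: "seqa (k + 2) + seqa (k + 1) = real (k + 3) * 2 ^ k"
proof (induction k)
  case 0 then show ?case by (simp add: numeral_eq_Suc)
next
  case (Suc k)
  have e: "seqa (Suc k + 2) = ((real (k+3) + 2) * seqa (k + 2) + 2 * (real (k+3) + 1) * seqa (k + 1)) / real (k+3)"
    by (simp add: numeral_eq_Suc)
  have s1: "seqa (k + 1) = real (k + 3) * 2 ^ k - seqa (k + 2)" using Suc by simp
  have "seqa (Suc k + 2) = real (k + 4) * 2 ^ (Suc k) - seqa (k + 2)"
    unfolding e s1 by (simp add: field_simps)
  then show ?case by (simp add: numeral_eq_Suc)
qed

lemma main_F: "1 \<le> n \<Longrightarrow> real (card {f \<in> ORCT n. card (fixed_points n f) = 1}) = seqa n"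
proof (induction n rule: dec_induct)
  case base
  have "real (card (ORCT 1)) * 2 = 2" using card_ORCT_formula[of 1] by simp
  then have "card (ORCT 1) = 1" by simp
  moreover have "card {f \<in> ORCT 1. card (fixed_points 1 f) = 0} = 0" using Z1 by (simp only: card.empty)
  ultimately have "card {f \<in> ORCT 1. card (fixed_points 1 f) = 1} = 1" using card_split[of 1] by linarith
  then show ?case by simp
next
  case (step k)
  obtain j where j: "k = Suc j" using step by (cases k) auto
  have T: "real (card (ORCT (Suc k))) * 2 = real (Suc k) * 2 ^ Suc k - real k * 2 ^ k"
    using card_ORCT_formula[of "Suc k"] by simp
  have S: "seqa (j + 2) + seqa (j + 1) = real (j + 3) * 2 ^ j" by (rule seqa_pair)
  have Z: "card {f \<in> ORCT (Suc k). card (fixed_points (Suc k) f) = 0} = card {f \<in> ORCT k. card (fixed_points k f) = 1}"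
    using card_Z_F step by auto
  have "real (card (ORCT (Suc k))) = seqa (Suc k) + seqa k"
    using T S unfolding j by (simp add: algebra_simps numeral_eq_Suc)
  then show ?case using card_split[of "Suc k"] Z step.IH by simp
qed

theorem lemma3p9:
  shows "(\<forall>n\<ge>2. real (card {f \<in> ORCT n. card (fixed_points n f) = 0}) = seqa (n - 1))
       \<and> (\<forall>n\<ge>1. real (card {f \<in> ORCT n. card (fixed_points n f) = 1}) = seqa n)
       \<and> (\<forall>n m. m \<ge> 2 \<longrightarrow> {f \<in> ORCT n. card (fixed_points n f) = m} = {})"
proof (intro conjI allI impI)
  fix n :: nat assume n: "n \<ge> 2"
  then obtain m where m: "n = Suc m" "1 \<le> m" by (cases n) auto
  show "real (card {f \<in> ORCT n. card (fixed_points n f) = 0}) = seqa (n - 1)"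
    using card_Z_F[OF m(2)] main_F[OF m(2)] m by simp
next
  fix n :: nat assume "n \<ge> 1"
  then show "real (card {f \<in> ORCT n. card (fixed_points n f) = 1}) = seqa n" by (rule main_F)
next
  fix n m :: nat assume "m \<ge> 2"
  show "{f \<in> ORCT n. card (fixed_points n f) = m} = {}"
  proof (rule equals0I)
    fix f assume "f \<in> {f \<in> ORCT n. card (fixed_points n f) = m}"
    then have "f \<in> ORCT n" "card (fixed_points n f) = m" by auto
    then show False using fp_le1[of f n] \<open>m \<ge> 2\<close> by linarith
  qed
qed

end
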